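(* Let $\{x_k\}$ be generated by the Subgradient-InexP method with the exogenous stepsize rule, under the standing assumptions, and let $\Omega:=\{x\in C: f(x)\le\inf_k f(x_k)\}$. If $\Omega\neq\varnothing$, then $\{x_k\}$ is quasi-Fejér convergent to $\Omega$; consequently $\{x_k\}$ is bounded.
   Context: A sequence $\{y_k\}\subset\mathbb{R}^n$ is quasi-Fejér convergent to a nonempty set $W$ if for every $w\in W$ there is $\{\delta_k\}$ with $\delta_k\ge0$, $\sum_k\delta_k<\infty$, and $\|y_{k+1}-w\|^2\le\|y_k-w\|^2+\delta_k$ for all $k$. Problem: minimize a convex $f:\mathbb{R}^n\to\mathbb{R}$ over a nonempty closed convex $C\subset\mathbb{R}^n$. For $\epsilon\ge0$, $\partial_\epsilon f(x):=\{s: f(y)\ge f(x)+\langle s,y-x\rangle-\epsilon\ \forall y\}$. Relative error tolerance function: any $\varphi_{\gamma,\theta,\lambda}:(\mathbb{R}^n)^3\to[0,\infty)$ with $\varphi_{\gamma,\theta,\lambda}(u,v,w)\le\gamma\|v-u\|^2+\theta\|w-v\|^2+\lambda\|w-u\|^2$; for $u\in C$, $\mathcal{P}_C(\varphi_{\gamma,\theta,\lambda},u,v):=\{w\in C:\langle v-w,z-w\rangle\le\varphi_{\gamma,\theta,\lambda}(u,v,w)\ \forall z\in C\}$. Subgradient-InexP method: $x_0\in C$; at iteration $k$, if $0\in\partial f(x_k)$ stop; otherwise choose nonzero $s_k\in\partial_{\epsilon_k}f(x_k)$, stepsize $t_k>0$, and $x_{k+1}\in\mathcal{P}_C(\varphi_{\gamma_k,\theta_k,\lambda_k},x_k,x_k-t_ks_k)$.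 Standing assumptions: $\gamma_k\in[0,\bar\gamma)$, $\theta_k\in[0,\bar\theta)$, $\lambda_k\in[0,\bar\lambda)$ with $\bar\gamma\ge0$, $\bar\theta,\bar\lambda\in[0,1/2)$; the sequence is infinite. Exogenous stepsize rule: $\mu\ge0$; $\{\alpha_k\}$, $\{\epsilon_k\}$ nonnegative, $\{\epsilon_k\}$ nonincreasing, $\sum_k\alpha_k=+\infty$, $\sum_k\alpha_k^2<+\infty$, $\epsilon_k\le\mu\alpha_k$; $t_k:=\alpha_k/\eta_k$, $\eta_k:=\max\{1,\|s_k\|\}$. *)

theory Defs
  imports "HOL-Analysis.Analysis"
begin

definition eps_subdiff :: "('a::real_inner \<Rightarrow> real) \<Rightarrow> real \<Rightarrow> 'a \<Rightarrow> 'a set" where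
  "eps_subdiff f eps x = {s. \<forall>y. f y \<ge> f x + inner s (y - x) - eps}"

definition quasi_fejer :: "(nat \<Rightarrow> 'a::real_normed_vector) \<Rightarrow> 'a set \<Rightarrow> bool" where
  "quasi_fejer y W \<longleftrightarrow> W \<noteq> {} \<and>
     (\<forall>w\<in>W. \<exists>\<delta>::nat \<Rightarrow> real. (\<forall>k. \<delta> k \<ge> 0) \<and> summable \<delta> \<and>
        (\<forall>k. (norm (y (Suc k) - w))\<^sup>2 \<le> (norm (y k - w))\<^sup>2 + \<delta> k))"

definition rel_err_tol :: "real \<Rightarrow> real \<Rightarrow> real \<Rightarrow> ('a::real_normed_vector \<Rightarrow> 'a \<Rightarrow> 'a \<Rightarrow> real) \<Rightarrow> bool" where
  "rel_err_tol \<gamma> \<theta> lam \<phi> \<longleftrightarrow> (\<forall>u v w. 0 \<le> \<phi> u v w \<and>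
     \<phi> u v w \<le> \<gamma> * (norm (v - u))\<^sup>2 + \<theta> * (norm (w - v))\<^sup>2 + lam * (norm (w - u))\<^sup>2)"

definition inexP :: "'a::real_inner set \<Rightarrow> ('a \<Rightarrow> 'a \<Rightarrow> 'a \<Rightarrow> real) \<Rightarrow> 'a \<Rightarrow> 'a \<Rightarrow> 'a set" where
  "inexP C \<phi> u v = {w\<in>C. \<forall>z\<in>C. inner (v - w) (z - w) \<le> \<phi> u v w}"

end

theory Submission imports Defs begin

lemma d_bound:
  fixes a d c G :: real
  assumes "c > 0" "a \<ge> 0" "d \<ge> 0" "G \<ge> 0" "c*d\<^sup>2 \<le> G*a\<^sup>2 + 2*a*d"
  shows "d \<le> ((G+2)/c + 1)*a"
proof (cases "d \<le> a")
  case True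
  have "(G+2)/c \<ge> 0" using assms by simp
  then have "1*a \<le> ((G+2)/c + 1)*a" using assms(2) by (intro mult_right_mono) auto
  then show ?thesis using True by linarith
next
  case False
  then have dp: "d > 0" and ad: "a < d" using assms by auto
  have "G*a\<^sup>2 \<le> G*(a*d)" using assms ad
    by (intro mult_left_mono) (auto simp: power2_eq_square intro: mult_left_mono)
  then have "c*d*d \<le> (G+2)*a*d" using assms(5) by (simp add: power2_eq_square algebra_simps)
  then have "c*d \<le> (G+2)*a" using dp by simp
  then have "d \<le> (G+2)*a/c" using assms(1) by (simp add: field_simps)
  also have "\<dots> \<le> ((G+2)/c + 1)*a" using assms(2) by (simp add: algebra_simps)
  finally show ?thesis .
qed

lemma step_ineq:
  fixes u w z s :: "'a::real_inner"
  fixes t e \<gamma> \<theta> lam \<gamma>b \<theta>b lb \<alpha> \<mu> p q :: real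
  assumes proj_z: "inner ((u - t *\<^sub>R s) - w) (z - w) \<le> p"
    and proj_u: "inner ((u - t *\<^sub>R s) - w) (u - w) \<le> q"
    and p_le: "p \<le> \<gamma> * (norm ((u - t *\<^sub>R s) - u))\<^sup>2 + \<theta> * (norm (w - (u - t *\<^sub>R s)))\<^sup>2 + lam * (norm (w - u))\<^sup>2"
    and q_le: "q \<le> \<gamma> * (norm ((u - t *\<^sub>R s) - u))\<^sup>2 + \<theta> * (norm (w - (u - t *\<^sub>R s)))\<^sup>2 + lam * (norm (w - u))\<^sup>2"
    and g: "0 \<le> \<gamma>" "\<gamma> \<le> \<gamma>b" and th: "0 \<le> \<theta>" "\<theta> \<le> \<theta>b" and l: "0 \<le> lam" "lam \<le> lb"
    and thb: "\<theta>b < 1/2" and lbb: "lb < 1/2"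
    and t: "t > 0" and a_le: "t * norm s \<le> \<alpha>" and t_le: "t \<le> \<alpha>"
    and sz: "inner s (z - u) \<le> e" and e: "e \<le> \<mu> * \<alpha>" and mu: "\<mu> \<ge> 0"
  shows "(norm (w - z))\<^sup>2 \<le> (norm (u - z))\<^sup>2 +
     (2*\<gamma>b + ((\<gamma>b+3)/(1-\<theta>b-lb) + 2)\<^sup>2 + 2*((\<gamma>b+3)/(1-\<theta>b-lb) + 1) + 2*\<mu>) * \<alpha>\<^sup>2"
proof -
  define a where "a = t * norm s"
  define d where "d = norm (w - u)"
  define v where "v = u - t *\<^sub>R s"
  define c where "c = 1 - \<theta>b - lb"
  define D where "D = (\<gamma>b+3)/c + 1"
  have a0: "a \<ge> 0" "d \<ge> 0" using t by (auto simp: a_def d_def)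
  have c0: "c > 0" using thb lbb by (simp add: c_def)
  have al0: "\<alpha> \<ge> 0" using a0 a_le a_def by linarith
  have nvu: "norm (v - u) = a" using t by (simp add: v_def a_def)
  have wv: "w - v = (w - u) + t *\<^sub>R s" by (simp add: v_def)
  have sq: "(norm (x + y))\<^sup>2 = (norm x)\<^sup>2 + 2 * inner x y + (norm y)\<^sup>2" for x y :: 'a
    by (simp add: power2_norm_eq_inner inner_add_left inner_add_right inner_commute)
  have nwv: "(norm (w - v))\<^sup>2 = d\<^sup>2 + 2 * (t * inner s (w - u)) + a\<^sup>2"
    unfolding wv sq d_def a_def using t
    by (simp add: inner_commute power_mult_distrib)
  have cs: "\<bar>t * inner s (w - u)\<bar> \<le> a * d"
    using Cauchy_Schwarz_ineq2[of s "w-u"] t unfolding a_def d_def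
    by (simp add: abs_mult mult.assoc mult_left_mono)
  have lhs_u: "inner (v - w) (u - w) = d\<^sup>2 + t * inner s (w - u)"
    unfolding v_def d_def
    by (simp only: power2_norm_eq_inner inner_diff_left inner_diff_right inner_scaleR_left inner_scaleR_right inner_commute) (simp add: algebra_simps inner_commute)
  have "d\<^sup>2 + t * inner s (w - u) \<le> \<gamma>*a\<^sup>2 + \<theta>*(d\<^sup>2 + 2 * (t * inner s (w - u)) + a\<^sup>2) + lam*d\<^sup>2"
    using proj_u q_le lhs_u nvu nwv unfolding v_def d_def by simp
  then have "(1-\<theta>-lam)*d\<^sup>2 \<le> (\<gamma>+\<theta>)*a\<^sup>2 + (2*\<theta> - 1)*(t * inner s (w - u))"
    by (simp add: algebra_simps)
  also have "\<dots> \<le> (\<gamma>b+1)*a\<^sup>2 + 2*a*d"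
  proof -
    have "(\<gamma>+\<theta>)*a\<^sup>2 \<le> (\<gamma>b+1)*a\<^sup>2" using g th thb by (intro mult_right_mono) auto
    moreover have "(2*\<theta> - 1)*(t * inner s (w - u)) \<le> \<bar>2*\<theta> - 1\<bar> * \<bar>t * inner s (w - u)\<bar>"
      by (metis abs_ge_self abs_mult)
    moreover have "\<bar>2*\<theta> - 1\<bar> * \<bar>t * inner s (w - u)\<bar> \<le> 2 * (a*d)"
      using cs th thb by (intro mult_mono) auto
    ultimately show ?thesis by linarith
  qed
  finally have h1: "(1-\<theta>-lam)*d\<^sup>2 \<le> (\<gamma>b+1)*a\<^sup>2 + 2*a*d" .
  have "c*d\<^sup>2 \<le> (1-\<theta>-lam)*d\<^sup>2" unfolding c_def using th l by (intro mult_right_mono) auto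
  with h1 have "c*d\<^sup>2 \<le> (\<gamma>b+1)*a\<^sup>2 + 2*a*d" by linarith
  from d_bound[OF c0 a0 _ this] g have dD: "d \<le> D * a" unfolding D_def by (simp add: add.commute)
  have D0: "D \<ge> 0" unfolding D_def using c0 g by simp
  have ident: "(norm (w - z))\<^sup>2 = (norm (u - z))\<^sup>2 - d\<^sup>2 + 2 * inner (v - w) (z - w)
       - 2 * (t * inner s (w - u)) + 2 * (t * inner s (z - u))"
    unfolding v_def d_def
    by (simp only: power2_norm_eq_inner inner_diff_left inner_diff_right inner_scaleR_left inner_scaleR_right inner_commute) (simp add: algebra_simps inner_commute)
  have pz: "inner (v - w) (z - w) \<le> \<gamma>*a\<^sup>2 + \<theta>*(norm (w - v))\<^sup>2 + lam*d\<^sup>2"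
    using proj_z p_le nvu unfolding v_def d_def by simp
  have nwv2: "(norm (w - v))\<^sup>2 \<le> (D+1)\<^sup>2 * a\<^sup>2"
  proof -
    have "norm (w - v) \<le> d + a" unfolding wv d_def a_def using t
      by (metis norm_scaleR norm_triangle_ineq abs_of_pos)
    also have "\<dots> \<le> (D+1)*a" using dD by (simp add: algebra_simps)
    finally have "norm (w - v) \<le> (D+1)*a" .
    then have "(norm (w - v))\<^sup>2 \<le> ((D+1)*a)\<^sup>2" by (intro power_mono) auto
    then show ?thesis by (simp add: power_mult_distrib)
  qed
  have t1: "2*\<theta>*(norm (w - v))\<^sup>2 \<le> (D+1)\<^sup>2 * a\<^sup>2"
  proof -
    have "2*\<theta>*(norm (w - v))\<^sup>2 \<le> 1 * (norm (w - v))\<^sup>2" using th thb by (intro mult_right_mono) auto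
    then show ?thesis using nwv2 by linarith
  qed
  have t2: "2*lam*d\<^sup>2 \<le> 1*d\<^sup>2" using l lbb by (intro mult_right_mono) auto
  have t3: "- 2 * (t * inner s (w - u)) \<le> 2*D*a\<^sup>2"
  proof -
    have "a*d \<le> a*(D*a)" using dD a0 by (simp add: mult_left_mono)
    then show ?thesis using cs by (simp add: power2_eq_square algebra_simps)
  qed
  have t4: "2 * (t * inner s (z - u)) \<le> 2*\<mu>*\<alpha>\<^sup>2"
  proof -
    have "t * inner s (z - u) \<le> t * e" using sz t by simp
    also have "\<dots> \<le> \<alpha> * (\<mu>*\<alpha>)"
    proof (cases "e \<ge> 0")
      case True then show ?thesis using t_le e al0 t by (intro mult_mono) auto
    next
      case False then have "t*e \<le> 0" using t by (simp add: mult_nonneg_nonpos)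
      moreover have "\<alpha> * (\<mu>*\<alpha>) \<ge> 0" using al0 mu by simp
      ultimately show ?thesis by linarith
    qed
    finally show ?thesis by (simp add: power2_eq_square algebra_simps)
  qed
  have t5: "2*\<gamma>*a\<^sup>2 \<le> 2*\<gamma>b*a\<^sup>2" using g by (simp add: mult_right_mono)
  have "(norm (w - z))\<^sup>2 \<le> (norm (u - z))\<^sup>2 + (2*\<gamma>b + (D+1)\<^sup>2 + 2*D) * a\<^sup>2 + 2*\<mu>*\<alpha>\<^sup>2"
    using ident pz t1 t2 t3 t4 t5 by (simp add: algebra_simps)
  also have "(2*\<gamma>b + (D+1)\<^sup>2 + 2*D) * a\<^sup>2 \<le> (2*\<gamma>b + (D+1)\<^sup>2 + 2*D) * \<alpha>\<^sup>2"
    using g D0 a0 a_le a_def by (intro mult_left_mono power_mono) auto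
  finally show ?thesis unfolding D_def c_def by (simp add: algebra_simps)
qed

theorem mainTheorem4:
  fixes f :: "'a::euclidean_space \<Rightarrow> real" and C :: "'a set"
    and x s :: "nat \<Rightarrow> 'a"
    and t \<alpha> \<epsilon> \<gamma> \<theta> lam :: "nat \<Rightarrow> real"
    and \<phi> :: "nat \<Rightarrow> 'a \<Rightarrow> 'a \<Rightarrow> 'a \<Rightarrow> real"
    and \<gamma>bar \<theta>bar lambar \<mu> :: real
  assumes f_convex: "convex_on UNIV f"
    and C_closed: "closed C" and C_convex: "convex C" and C_ne: "C \<noteq> {}"
    and x0: "x 0 \<in> C"
    and no_stop: "\<And>k. 0 \<notin> eps_subdiff f 0 (x k)"
    and s_nz: "\<And>k. s k \<noteq> 0"
    and s_sub: "\<And>k. s k \<in> eps_subdiff f (\<epsilon> k) (x k)"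
    and t_pos: "\<And>k. t k > 0"
    and t_def: "\<And>k. t k = \<alpha> k / max 1 (norm (s k))"
    and x_step: "\<And>k. x (Suc k) \<in> inexP C (\<phi> k) (x k) (x k - t k *\<^sub>R s k)"
    and \<phi>_tol: "\<And>k. rel_err_tol (\<gamma> k) (\<theta> k) (lam k) (\<phi> k)"
    and \<gamma>_rng: "\<And>k. 0 \<le> \<gamma> k \<and> \<gamma> k < \<gamma>bar"
    and \<theta>_rng: "\<And>k. 0 \<le> \<theta> k \<and> \<theta> k < \<theta>bar"
    and lam_rng: "\<And>k. 0 \<le> lam k \<and> lam k < lambar"
    and \<gamma>bar: "\<gamma>bar \<ge> 0"
    and \<theta>bar: "0 \<le> \<theta>bar \<and> \<theta>bar < 1/2"
    and lambar: "0 \<le> lambar \<and> lambar < 1/2"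
    and \<mu>_nn: "\<mu> \<ge> 0"
    and \<alpha>_nn: "\<And>k. \<alpha> k \<ge> 0"
    and \<epsilon>_nn: "\<And>k. \<epsilon> k \<ge> 0"
    and \<epsilon>_dec: "decseq \<epsilon>"
    and \<alpha>_div: "\<not> summable \<alpha>"
    and \<alpha>_sq: "summable (\<lambda>k. (\<alpha> k)\<^sup>2)"
    and \<epsilon>_le: "\<And>k. \<epsilon> k \<le> \<mu> * \<alpha> k"
    and \<Omega>_ne: "{z\<in>C. \<forall>k. f z \<le> f (x k)} \<noteq> {}"
  shows "quasi_fejer x {z\<in>C. \<forall>k. f z \<le> f (x k)} \<and> bounded (range x)"
proof -
  let ?\<Omega> = "{z\<in>C. \<forall>k. f z \<le> f (x k)}"
  define K where "K = 2*\<gamma>bar + ((\<gamma>bar+3)/(1-\<theta>bar-lambar) + 2)\<^sup>2 + 2*((\<gamma>bar+3)/(1-\<theta>bar-lambar) + 1) + 2*\<mu>"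
  have xC: "x k \<in> C" for k
  proof (cases k)
    case 0 then show ?thesis using x0 by simp
  next
    case (Suc j) then show ?thesis using x_step[of j] by (simp add: inexP_def)
  qed
  have ta: "t k * norm (s k) \<le> \<alpha> k \<and> t k \<le> \<alpha> k" for k
  proof -
    have m: "max 1 (norm (s k)) > 0" by simp
    have "t k * norm (s k) = \<alpha> k * (norm (s k) / max 1 (norm (s k)))" using t_def[of k] by simp
    also have "\<dots> \<le> \<alpha> k * 1" using \<alpha>_nn[of k] m by (intro mult_left_mono) (auto simp: divide_le_eq_1)
    finally have 1: "t k * norm (s k) \<le> \<alpha> k" by simp
    have "t k = \<alpha> k * (1 / max 1 (norm (s k)))" using t_def[of k] by simp
    also have "\<dots> \<le> \<alpha> k * 1" using \<alpha>_nn[of k] m by (intro mult_left_mono) (auto simp: divide_le_eq_1)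
    finally show ?thesis using 1 by simp
  qed
  have step: "(norm (x (Suc k) - z))\<^sup>2 \<le> (norm (x k - z))\<^sup>2 + K * (\<alpha> k)\<^sup>2" if zO: "z \<in> ?\<Omega>" for z k
  proof -
    have zC: "z \<in> C" and fz: "f z \<le> f (x k)" using zO by auto
    have xs: "x (Suc k) \<in> C" "\<forall>y\<in>C. inner ((x k - t k *\<^sub>R s k) - x (Suc k)) (y - x (Suc k)) \<le> \<phi> k (x k) (x k - t k *\<^sub>R s k) (x (Suc k))"
      using x_step[of k] by (auto simp: inexP_def)
    have tol: "\<phi> k (x k) (x k - t k *\<^sub>R s k) (x (Suc k)) \<le> \<gamma> k * (norm ((x k - t k *\<^sub>R s k) - x k))\<^sup>2 + \<theta> k * (norm (x (Suc k) - (x k - t k *\<^sub>R s k)))\<^sup>2 + lam k * (norm (x (Suc k) - x k))\<^sup>2"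
      using \<phi>_tol[of k] unfolding rel_err_tol_def by blast
    have sz: "inner (s k) (z - x k) \<le> \<epsilon> k"
      using s_sub[of k] fz by (simp add: eps_subdiff_def) (smt (verit))
    show ?thesis
      using step_ineq[OF xs(2)[rule_format, OF zC] xs(2)[rule_format, OF xC[of k]] tol tol
        _ _ _ _ _ _ _ _ t_pos ta[THEN conjunct1] ta[THEN conjunct2] sz \<epsilon>_le \<mu>_nn]
        \<gamma>_rng[of k] \<theta>_rng[of k] lam_rng[of k] \<theta>bar lambar
      unfolding K_def by force
  qed
  have summ: "summable (\<lambda>k. K * (\<alpha> k)\<^sup>2)" using \<alpha>_sq by (rule summable_mult)
  have K0: "K \<ge> 0"
  proof -
    have "1 - \<theta>bar - lambar > 0" using \<theta>bar lambar by simp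
    then have "(\<gamma>bar+3)/(1-\<theta>bar-lambar) \<ge> 0" using \<gamma>bar by simp
    then show ?thesis unfolding K_def using \<gamma>bar \<mu>_nn
      by (smt (verit) zero_le_power2)
  qed
  have qf: "quasi_fejer x ?\<Omega>"
    unfolding quasi_fejer_def using \<Omega>_ne
    proof (intro conjI ballI exI[of _ "\<lambda>k. K * (\<alpha> k)\<^sup>2"])
    show "summable (\<lambda>k. K * (\<alpha> k)\<^sup>2)" by (rule summ)
  qed (auto simp: K0 step)
  obtain z where zO: "z \<in> ?\<Omega>" using \<Omega>_ne by blast
  define R where "R = (norm (x 0 - z))\<^sup>2 + (\<Sum>k. K * (\<alpha> k)\<^sup>2)"
  have part: "(norm (x n - z))\<^sup>2 \<le> (norm (x 0 - z))\<^sup>2 + (\<Sum>k<n. K * (\<alpha> k)\<^sup>2)" for n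
  proof (induction n)
    case 0 then show ?case by simp
  next
    case (Suc n) then show ?case using step[OF zO, of n] by simp
  qed
  have sl: "(\<Sum>k<n. K * (\<alpha> k)\<^sup>2) \<le> (\<Sum>k. K * (\<alpha> k)\<^sup>2)" for n
    using summ K0 by (intro sum_le_suminf) auto
  have "(norm (x n - z))\<^sup>2 \<le> R" for n using part[of n] sl[of n] unfolding R_def by linarith
  then have "norm (x n - z) \<le> sqrt R" for n by (rule real_le_rsqrt)
  then have "norm (x n) \<le> norm z + sqrt R" for n
    by (smt (verit) norm_triangle_sub)
  then have "bounded (range x)" by (intro boundedI) auto
  with qf show ?thesis by simp
qed

end
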